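(* An ample groupoid $\mathcal G$ is minimal if and only if, for every nonempty compact open subset $V$ of $\mathcal G^{(0)}$, the element $1_V$ generates $A_{\mathbb B}(\mathcal G)$ as a two-sided ideal.
   Context: $\mathbb B=(\{0,1\},\text{or},\text{and})$ is the Boolean semifield. An ample groupoid is a topological groupoid whose unit space $\mathcal G^{(0)}$ is locally compact Hausdorff and totally disconnected and whose source and range maps $s,r$ are local homeomorphisms ($\mathcal G$ need not be Hausdorff). A subset $D\subseteq\mathcal G^{(0)}$ is invariant if $s(\gamma)\in D$ implies $r(\gamma)\in D$; $\mathcal G$ is minimal if $\mathcal G^{(0)}$ has no open invariant subsets other than $\varnothing$ and $\mathcal G^{(0)}$. The Steinberg algebra $A_{\mathbb B}(\mathcal G)$ is the set of $\mathbb B$-valued functions on $\mathcal G$ that are finite sums of characteristic functions $1_U$ of compact open bisections $U$ (subsets on which $s,r$ are homeomorphisms onto their images), with pointwise addition and convolution $(f*g)(\gamma)=\sum_{\alpha\beta=\gamma}f(\alpha)g(\beta)$. An ideal of this algebra is a subset closed under addition, containing $0$, and closed under left and right multiplication by arbitrary elements of the algebra. *)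

theory Defs
  imports "HOL-Analysis.Analysis"
begin

text \<open>A groupoid is modelled on a whole type 'a: source s, range r, partial product m
  (defined on pairs (x,y) with s x = r y), inverse iv. The unit space is the image of s.\<close>

definition groupoid :: "('a \<Rightarrow> 'a) \<Rightarrow> ('a \<Rightarrow> 'a) \<Rightarrow> ('a \<Rightarrow> 'a \<Rightarrow> 'a) \<Rightarrow> ('a \<Rightarrow> 'a) \<Rightarrow> bool" where
  "groupoid s r m iv \<longleftrightarrow>
     (\<forall>x. s (s x) = s x \<and> r (s x) = s x \<and> s (r x) = r x \<and> r (r x) = r x) \<and>
     (\<forall>x y. s x = r y \<longrightarrow> s (m x y) = s y \<and> r (m x y) = r x) \<and>
     (\<forall>x y z. s x = r y \<and> s y = r z \<longrightarrow> m (m x y) z = m x (m y z)) \<and>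
     (\<forall>x. m (r x) x = x \<and> m x (s x) = x) \<and>
     (\<forall>x. s (iv x) = r x \<and> r (iv x) = s x \<and> m x (iv x) = r x \<and> m (iv x) x = s x)"

definition units :: "('a \<Rightarrow> 'a) \<Rightarrow> 'a set" where
  "units s = range s"

definition totally_disconnected_space :: "'a topology \<Rightarrow> bool" where
  "totally_disconnected_space X \<longleftrightarrow> (\<forall>x y. connected_component_of X x y \<longrightarrow> x = y)"

definition local_homeo_onto :: "('a::topological_space \<Rightarrow> 'a) \<Rightarrow> 'a set \<Rightarrow> bool" where
  "local_homeo_onto f Y \<longleftrightarrow> f ` UNIV \<subseteq> Y \<and>
     (\<forall>x. \<exists>U. open U \<and> x \<in> U \<and> openin (top_of_set Y) (f ` U) \<and>
            homeomorphic_map (top_of_set U) (top_of_set (f ` U)) f)"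

definition ample_groupoid ::
  "('a::topological_space \<Rightarrow> 'a) \<Rightarrow> ('a \<Rightarrow> 'a) \<Rightarrow> ('a \<Rightarrow> 'a \<Rightarrow> 'a) \<Rightarrow> ('a \<Rightarrow> 'a) \<Rightarrow> bool" where
  "ample_groupoid s r m iv \<longleftrightarrow>
     groupoid s r m iv \<and>
     continuous_on {(x, y). s x = r y} (\<lambda>(x, y). m x y) \<and>
     continuous_on UNIV iv \<and>
     locally_compact_space (top_of_set (units s)) \<and>
     Hausdorff_space (top_of_set (units s)) \<and>
     totally_disconnected_space (top_of_set (units s)) \<and>
     local_homeo_onto s (units s) \<and> local_homeo_onto r (units s)"

definition invariant :: "('a \<Rightarrow> 'a) \<Rightarrow> ('a \<Rightarrow> 'a) \<Rightarrow> 'a set \<Rightarrow> bool" where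
  "invariant s r D \<longleftrightarrow> D \<subseteq> units s \<and> (\<forall>g. s g \<in> D \<longrightarrow> r g \<in> D)"

definition minimal_groupoid :: "('a::topological_space \<Rightarrow> 'a) \<Rightarrow> ('a \<Rightarrow> 'a) \<Rightarrow> bool" where
  "minimal_groupoid s r \<longleftrightarrow>
     (\<forall>D. openin (top_of_set (units s)) D \<and> invariant s r D \<longrightarrow> D = {} \<or> D = units s)"

definition bisection :: "('a::topological_space \<Rightarrow> 'a) \<Rightarrow> ('a \<Rightarrow> 'a) \<Rightarrow> 'a set \<Rightarrow> bool" where
  "bisection s r U \<longleftrightarrow>
     homeomorphic_map (top_of_set U) (top_of_set (s ` U)) s \<and>
     homeomorphic_map (top_of_set U) (top_of_set (r ` U)) r"

definition compact_open_bisection :: "('a::topological_space \<Rightarrow> 'a) \<Rightarrow> ('a \<Rightarrow> 'a) \<Rightarrow> 'a set \<Rightarrow> bool" where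
  "compact_open_bisection s r U \<longleftrightarrow> compact U \<and> open U \<and> bisection s r U"

definition chi :: "'a set \<Rightarrow> 'a \<Rightarrow> bool" where
  "chi U = (\<lambda>g. g \<in> U)"

definition bplus :: "('a \<Rightarrow> bool) \<Rightarrow> ('a \<Rightarrow> bool) \<Rightarrow> 'a \<Rightarrow> bool" where
  "bplus f h = (\<lambda>g. f g \<or> h g)"

definition conv :: "('a \<Rightarrow> 'a) \<Rightarrow> ('a \<Rightarrow> 'a) \<Rightarrow> ('a \<Rightarrow> 'a \<Rightarrow> 'a) \<Rightarrow>
    ('a \<Rightarrow> bool) \<Rightarrow> ('a \<Rightarrow> bool) \<Rightarrow> 'a \<Rightarrow> bool" where
  "conv s r m f h = (\<lambda>g. \<exists>a b. s a = r b \<and> m a b = g \<and> f a \<and> h b)"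

text \<open>Steinberg algebra over the Boolean semifield: finite sums (= pointwise or) of
  characteristic functions of compact open bisections.\<close>
definition steinberg :: "('a::topological_space \<Rightarrow> 'a) \<Rightarrow> ('a \<Rightarrow> 'a) \<Rightarrow> ('a \<Rightarrow> bool) set" where
  "steinberg s r = {f. \<exists>F. finite F \<and> (\<forall>U\<in>F. compact_open_bisection s r U) \<and>
                        f = (\<lambda>g. \<exists>U\<in>F. g \<in> U)}"

definition is_ideal :: "('a::topological_space \<Rightarrow> 'a) \<Rightarrow> ('a \<Rightarrow> 'a) \<Rightarrow> ('a \<Rightarrow> 'a \<Rightarrow> 'a) \<Rightarrow>
    ('a \<Rightarrow> bool) set \<Rightarrow> bool" where
  "is_ideal s r m I \<longleftrightarrow> I \<subseteq> steinberg s r \<and> (\<lambda>_. False) \<in> I \<and>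
     (\<forall>f\<in>I. \<forall>h\<in>I. bplus f h \<in> I) \<and>
     (\<forall>a\<in>steinberg s r. \<forall>f\<in>I. conv s r m a f \<in> I \<and> conv s r m f a \<in> I)"

definition ideal_generated :: "('a::topological_space \<Rightarrow> 'a) \<Rightarrow> ('a \<Rightarrow> 'a) \<Rightarrow> ('a \<Rightarrow> 'a \<Rightarrow> 'a) \<Rightarrow>
    ('a \<Rightarrow> bool) \<Rightarrow> ('a \<Rightarrow> bool) set" where
  "ideal_generated s r m f = \<Inter>{I. is_ideal s r m I \<and> f \<in> I}"

end

theory Submission
  imports Defs
begin

lemma zero_dim:
  fixes S :: "'a::topological_space set"
  assumes lc: "locally_compact_space (top_of_set S)" and H: "Hausdorff_space (top_of_set S)"
    and td: "totally_disconnected_space (top_of_set S)"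
    and W: "openin (top_of_set S) W" and xW: "x \<in> W"
  obtains K where "compact K" "openin (top_of_set S) K" "x \<in> K" "K \<subseteq> W"
proof -
  have xS: "x \<in> S" using W xW openin_imp_subset by blast
  obtain U K0 where U: "openin (top_of_set S) U" and K0: "compactin (top_of_set S) K0" and "x \<in> U" "U \<subseteq> K0"
    using lc xS unfolding locally_compact_space_def by auto
  have K0S: "K0 \<subseteq> S" and cK0: "compact K0" using K0 by (auto simp: compactin_subtopology)
  let ?Y = "top_of_set K0"
  have lcY: "locally_compact_space ?Y"
    by (simp add: cK0 compact_imp_locally_compact_space compact_space_subtopology)
  have HY: "Hausdorff_space ?Y"
    using Hausdorff_space_subtopology[OF H, of K0] K0S by (simp add: subtopology_subtopology Int_absorb1)
  have xK0: "x \<in> K0" using \<open>x \<in> U\<close> \<open>U \<subseteq> K0\<close> by blast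
  have C: "connected_component_of_set ?Y x = {x}"
  proof
    show "connected_component_of_set ?Y x \<subseteq> {x}"
    proof
      fix y assume "y \<in> connected_component_of_set ?Y x"
      then have "connected_component_of ?Y x y" by simp
      then have "connected_component_of (top_of_set S) x y"
        using connected_component_of_mono[of euclidean K0 x y S] K0S by simp
      then show "y \<in> {x}" using td unfolding totally_disconnected_space_def by auto
    qed
    show "{x} \<subseteq> connected_component_of_set ?Y x"
      using xK0 by (simp add: connected_component_of_refl)
  qed
  have Ccomp: "{x} \<in> connected_components_of ?Y"
    by (metis C connected_component_in_connected_components_of topspace_euclidean_subtopology xK0)
  have UW: "openin ?Y (U \<inter> W)"
    using openin_subset_trans[of S "U \<inter> W" K0] U W \<open>U \<subseteq> K0\<close> K0S by blast
  obtain U' V' where U': "openin ?Y U'" and V': "openin ?Y V'" "disjnt U' V'" "U' \<union> V' = topspace ?Y"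
     "{x} \<subseteq> U'" "U' \<subseteq> U \<inter> W"
  proof (rule wilder_locally_compact_component_thm[OF lcY HY Ccomp _ UW])
    show "compactin ?Y {x}" using xK0 by simp
    show "{x} \<subseteq> U \<inter> W" using \<open>x \<in> U\<close> xW by auto
  qed (use that in auto)
  have "closedin ?Y U'"
  proof -
    have "U' = K0 - V'" using V' U' openin_imp_subset by (auto simp: disjnt_def)
    then show ?thesis using V' by auto
  qed
  then have "compact U'" using closedin_compact cK0 by blast
  moreover have "openin (top_of_set S) U'"
  proof -
    obtain T where T: "open T" "U' = K0 \<inter> T" using U' by (auto simp: openin_open)
    then have "U' = U \<inter> T" using \<open>U' \<subseteq> U \<inter> W\<close> \<open>U \<subseteq> K0\<close> by blast
    then show ?thesis using U T openin_Int_open by blast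
  qed
  ultimately show ?thesis using that V' by auto
qed

lemma lh_cont:
  fixes f :: "'a::topological_space \<Rightarrow> 'a"
  assumes "local_homeo_onto f Y" shows "continuous_on UNIV f"
proof -
  let ?F = "{U. open U \<and> continuous_on U f}"
  have "\<Union>?F = UNIV"
  proof -
    { fix x
      obtain U where "open U" "x \<in> U" "homeomorphic_map (top_of_set U) (top_of_set (f ` U)) f"
        using assms unfolding local_homeo_onto_def by blast
      then have "continuous_on U f"
        using homeomorphic_imp_continuous_map continuous_map_subtopology_eu by blast
      then have "x \<in> \<Union>?F" using \<open>open U\<close> \<open>x \<in> U\<close> by blast }
    then show ?thesis by blast
  qed
  moreover have "continuous_on (\<Union>?F) f" by (rule continuous_on_open_Union) auto
  ultimately show ?thesis by simp
qed

lemma lh_open: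
  fixes f :: "'a::topological_space \<Rightarrow> 'a"
  assumes lh: "local_homeo_onto f Y" and Y: "open Y" and A: "open A"
  shows "open (f ` A)"
proof (rule open_subopen[THEN iffD2], rule ballI)
  fix y assume "y \<in> f ` A"
  then obtain x where x: "x \<in> A" "y = f x" by blast
  obtain U where U: "open U" "x \<in> U" "openin (top_of_set Y) (f ` U)"
     and h: "homeomorphic_map (top_of_set U) (top_of_set (f ` U)) f"
    using lh unfolding local_homeo_onto_def by blast
  have "openin (top_of_set U) (A \<inter> U)" using openin_open_Int[OF A, of U] by (simp add: Int_commute)
  then have "openin (top_of_set (f ` U)) (f ` (A \<inter> U))"
    using homeomorphic_map_openness[OF h, of "A \<inter> U"] by simp
  then have "openin (top_of_set Y) (f ` (A \<inter> U))" using U(3) by (rule openin_trans)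
  then have "open (f ` (A \<inter> U))" using Y by (simp add: openin_open_eq)
  moreover have "y \<in> f ` (A \<inter> U)" using x U by simp
  moreover have "f ` (A \<inter> U) \<subseteq> f ` A" by (rule image_mono) simp
  ultimately show "\<exists>T. open T \<and> y \<in> T \<and> T \<subseteq> f ` A" by blast
qed

lemma homeo_restrict:
  assumes h: "homeomorphic_map (top_of_set U) (top_of_set (f ` U)) f" and B: "B \<subseteq> U"
  shows "homeomorphic_map (top_of_set B) (top_of_set (f ` B)) f"
proof -
  have inj: "inj_on f U" using homeomorphic_imp_injective_map[OF h] by simp
  have "f ` (U \<inter> B) = f ` U \<inter> f ` B" using inj B by (auto simp: inj_on_def)
  then have "homeomorphic_map (subtopology (top_of_set U) B) (subtopology (top_of_set (f ` U)) (f ` B)) f"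
    using homeomorphic_map_subtopologies[OF h] by simp
  then show ?thesis using B by (simp add: subtopology_subtopology Int_absorb1 image_mono)
qed

locale ag =
  fixes s r :: "'a::topological_space \<Rightarrow> 'a" and m :: "'a \<Rightarrow> 'a \<Rightarrow> 'a" and iv :: "'a \<Rightarrow> 'a"
  assumes amp: "ample_groupoid s r m iv"
begin

lemma gpd: "groupoid s r m iv" using amp unfolding ample_groupoid_def by simp

lemma ss[simp]: "s (s x) = s x" and rs[simp]: "r (s x) = s x" and sr[simp]: "s (r x) = r x"
  and rr[simp]: "r (r x) = r x"
  using gpd unfolding groupoid_def by auto

lemma sm: "s x = r y \<Longrightarrow> s (m x y) = s y" and rm: "s x = r y \<Longrightarrow> r (m x y) = r x"
  using gpd unfolding groupoid_def by auto

lemma assoc: "s x = r y \<Longrightarrow> s y = r z \<Longrightarrow> m (m x y) z = m x (m y z)"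
  using gpd unfolding groupoid_def by blast

lemma mr[simp]: "m (r x) x = x" and ms[simp]: "m x (s x) = x"
  using gpd unfolding groupoid_def by auto

lemma siv[simp]: "s (iv x) = r x" and riv[simp]: "r (iv x) = s x"
  and miv[simp]: "m x (iv x) = r x" and ivm[simp]: "m (iv x) x = s x"
  using gpd unfolding groupoid_def by auto

lemma iviv[simp]: "iv (iv x) = x"
proof -
  have e: "s (iv (iv x)) = s x" by simp
  have "iv (iv x) = m (iv (iv x)) (s (iv (iv x)))" by (rule ms[symmetric])
  also have "\<dots> = m (iv (iv x)) (s x)" by (simp only: e)
  also have "\<dots> = m (iv (iv x)) (m (iv x) x)" by (simp only: ivm)
  also have "\<dots> = m (m (iv (iv x)) (iv x)) x" by (rule assoc[symmetric]) auto
  also have "\<dots> = x" by simp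
  finally show ?thesis .
qed

lemma units_iff: "x \<in> units s \<longleftrightarrow> s x = x"
  unfolding units_def
proof
  assume "x \<in> range s" then obtain y where "x = s y" by auto
  then show "s x = x" by simp
next
  assume "s x = x" then show "x \<in> range s" by (metis rangeI)
qed

lemma unit_r: "x \<in> units s \<Longrightarrow> r x = x"
  by (metis units_iff rs)

lemma units_r: "units r = units s"
proof -
  have "r x \<in> range s" for x using range_eqI[of "r x" s "iv x"] by simp
  moreover have "s x \<in> range r" for x using range_eqI[of "s x" r "iv x"] by simp
  ultimately show ?thesis unfolding units_def by blast
qed

lemma range_s: "s x \<in> units s" and range_r: "r x \<in> units s"
  unfolding units_def using range_eqI[of "r x" s "iv x"] by auto

lemma lh_s: "local_homeo_onto s (units s)" and lh_r: "local_homeo_onto r (units s)"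
  using amp unfolding ample_groupoid_def by auto

lemma cont_s: "continuous_on UNIV s" and cont_r: "continuous_on UNIV r"
  using lh_cont lh_s lh_r by blast+

lemma cont_iv: "continuous_on UNIV iv"
  using amp unfolding ample_groupoid_def by auto

lemma cont_m: "continuous_on {(x, y). s x = r y} (\<lambda>(x, y). m x y)"
  using amp unfolding ample_groupoid_def by auto

lemma Haus: "Hausdorff_space (top_of_set (units s))"
  using amp unfolding ample_groupoid_def by auto

lemma open_units: "open (units s)"
proof (rule open_subopen[THEN iffD2], rule ballI)
  fix x assume x: "x \<in> units s"
  obtain U where U: "open U" "x \<in> U" and h: "homeomorphic_map (top_of_set U) (top_of_set (s ` U)) s"
    using lh_s unfolding local_homeo_onto_def by blast
  have inj: "inj_on s U" using homeomorphic_imp_injective_map[OF h] by simp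
  have o: "open (s -` U \<inter> UNIV)" using cont_s U(1) continuous_on_open_vimage[of UNIV s] by auto
  let ?T = "U \<inter> s -` U"
  have "open ?T" using o U(1) by (simp add: open_Int)
  moreover have "x \<in> ?T" using x U units_iff by auto
  moreover have "?T \<subseteq> units s"
  proof
    fix g assume g: "g \<in> ?T"
    then have "s (s g) = s g" "s g \<in> U" "g \<in> U" by auto
    then have "s g = g" using inj by (meson inj_onD)
    then show "g \<in> units s" using units_iff by simp
  qed
  ultimately show "\<exists>T. open T \<and> x \<in> T \<and> T \<subseteq> units s" by blast
qed

lemma openin_units: "openin (top_of_set (units s)) D \<longleftrightarrow> open D \<and> D \<subseteq> units s"
  using open_units openin_open_eq by blast

lemma open_s: "open A \<Longrightarrow> open (s ` A)" and open_r: "open A \<Longrightarrow> open (r ` A)"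
  using lh_open lh_s lh_r open_units by blast+

lemma open_vs: "open A \<Longrightarrow> open (s -` A)" and open_vr: "open A \<Longrightarrow> open (r -` A)"
  using cont_s cont_r continuous_on_open_vimage[of UNIV] by auto

end

context ag begin

lemma zd_units:
  assumes "open W" "W \<subseteq> units s" "x \<in> W"
  obtains K where "compact K" "open K" "x \<in> K" "K \<subseteq> W"
proof -
  have W: "openin (top_of_set (units s)) W" using assms openin_units by blast
  have lc: "locally_compact_space (top_of_set (units s))"
    and td: "totally_disconnected_space (top_of_set (units s))"
    using amp unfolding ample_groupoid_def by auto
  obtain K where "compact K" "openin (top_of_set (units s)) K" "x \<in> K" "K \<subseteq> W"
    using zero_dim[OF lc Haus td W \<open>x \<in> W\<close>] by blast
  then show ?thesis using that openin_units by blast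
qed

lemma homeo_units:
  assumes "K \<subseteq> units s"
  shows "homeomorphic_map (top_of_set K) (top_of_set (s ` K)) s"
    and "homeomorphic_map (top_of_set K) (top_of_set (r ` K)) r"
proof -
  have sK: "s ` K = K" using assms units_iff by (auto simp: image_iff) (metis subsetD)
  have rK: "r ` K = K" using assms unit_r by (auto simp: image_iff) (metis subsetD)
  have i: "homeomorphic_map (top_of_set K) (top_of_set K) id" by (simp add: homeomorphic_map_id)
  show "homeomorphic_map (top_of_set K) (top_of_set (s ` K)) s"
    unfolding sK by (rule homeomorphic_map_eq[OF i]) (use assms units_iff in auto)
  show "homeomorphic_map (top_of_set K) (top_of_set (r ` K)) r"
    unfolding rK by (rule homeomorphic_map_eq[OF i]) (use assms unit_r in auto)
qed

lemma cob_units: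
  assumes "K \<subseteq> units s" "compact K" "open K"
  shows "compact_open_bisection s r K"
  using assms homeo_units unfolding compact_open_bisection_def bisection_def by blast

lemma small_bisection:
  assumes "open Q" "g \<in> Q"
  obtains B where "compact_open_bisection s r B" "g \<in> B" "B \<subseteq> Q"
proof -
  obtain U1 where U1: "open U1" "g \<in> U1" and h1: "homeomorphic_map (top_of_set U1) (top_of_set (s ` U1)) s"
    using lh_s unfolding local_homeo_onto_def by blast
  obtain U2 where U2: "open U2" "g \<in> U2" and h2: "homeomorphic_map (top_of_set U2) (top_of_set (r ` U2)) r"
    using lh_r unfolding local_homeo_onto_def by blast
  define O' where "O' = Q \<inter> U1 \<inter> U2"
  have O': "open O'" "g \<in> O'" using assms U1 U2 unfolding O'_def by auto
  have hO: "homeomorphic_map (top_of_set O') (top_of_set (s ` O')) s"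
    by (rule homeo_restrict[OF h1]) (auto simp: O'_def)
  have a: "open (s ` O')" using open_s O' by blast
  have b: "s ` O' \<subseteq> units s" using range_s by blast
  have c: "s g \<in> s ` O'" using O' by blast
  obtain K where K: "compact K" "open K" "s g \<in> K" "K \<subseteq> s ` O'"
    using zd_units[OF a b c] by blast
  define B where "B = O' \<inter> s -` K"
  have oB: "open B" unfolding B_def using O' open_vs K by (simp add: open_Int)
  have gB: "g \<in> B" unfolding B_def using O' K by simp
  have BO: "B \<subseteq> Q" unfolding B_def O'_def by blast
  have "s ` B = K" unfolding B_def using K by blast
  then have "compactin (top_of_set (s ` O')) (s ` B)" using K by (simp add: compactin_subtopology)
  then have "compactin (top_of_set O') B"
    using homeomorphic_map_compactness[OF hO, of B] unfolding B_def by simp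
  then have cB: "compact B" by (simp add: compactin_subtopology)
  have "bisection s r B" unfolding bisection_def
  proof
    show "homeomorphic_map (top_of_set B) (top_of_set (s ` B)) s"
      by (rule homeo_restrict[OF h1]) (auto simp: B_def O'_def)
    show "homeomorphic_map (top_of_set B) (top_of_set (r ` B)) r"
      by (rule homeo_restrict[OF h2]) (auto simp: B_def O'_def)
  qed
  then show ?thesis using that oB gB BO cB unfolding compact_open_bisection_def by blast
qed

lemma iv_image: "iv ` B = iv -` B"
  by (auto simp: image_iff) (metis iviv)

lemma homeo_iv: "homeomorphic_map (top_of_set (iv ` B)) (top_of_set B) iv"
proof -
  have c: "continuous_on X iv" for X using cont_iv continuous_on_subset by blast
  have "homeomorphic_maps (top_of_set (iv ` B)) (top_of_set B) iv iv"
    unfolding homeomorphic_maps_def using c by (auto simp: image_iff)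
  then show ?thesis using homeomorphic_map_maps by blast
qed

lemma iv_cob:
  assumes "compact_open_bisection s r B"
  shows "compact_open_bisection s r (iv ` B)"
proof -
  have B: "compact B" "open B" and hs: "homeomorphic_map (top_of_set B) (top_of_set (s ` B)) s"
    and hr: "homeomorphic_map (top_of_set B) (top_of_set (r ` B)) r"
    using assms unfolding compact_open_bisection_def bisection_def by auto
  have "open (iv ` B)" unfolding iv_image
    using cont_iv B continuous_on_open_vimage[of UNIV iv] by auto
  moreover have "compact (iv ` B)"
    using B cont_iv continuous_on_subset compact_continuous_image by blast
  moreover have "homeomorphic_map (top_of_set (iv ` B)) (top_of_set (s ` iv ` B)) s"
  proof -
    have e: "s ` iv ` B = r ` B" by (simp add: image_image)
    show ?thesis unfolding e
      by (rule homeomorphic_map_eq[OF homeomorphic_map_compose[OF homeo_iv hr]]) auto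
  qed
  moreover have "homeomorphic_map (top_of_set (iv ` B)) (top_of_set (r ` iv ` B)) r"
  proof -
    have e: "r ` iv ` B = s ` B" by (simp add: image_image)
    show ?thesis unfolding e
      by (rule homeomorphic_map_eq[OF homeomorphic_map_compose[OF homeo_iv hs]]) auto
  qed
  ultimately show ?thesis unfolding compact_open_bisection_def bisection_def by blast
qed

end

context ag begin

lemma bis_inj:
  assumes "compact_open_bisection s r B" shows "inj_on s B" "inj_on r B"
  using assms homeomorphic_imp_injective_map unfolding compact_open_bisection_def bisection_def
  by fastforce+

lemma conv_unit_left:
  assumes "r ` B \<subseteq> V" "V \<subseteq> units s"
  shows "conv s r m (chi V) (chi B) = chi B"
proof (rule ext)
  fix g
  show "conv s r m (chi V) (chi B) g = chi B g" unfolding conv_def chi_def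
  proof
    assume "\<exists>a b. s a = r b \<and> m a b = g \<and> a \<in> V \<and> b \<in> B"
    then obtain a b where ab: "s a = r b" "m a b = g" "a \<in> V" "b \<in> B" by blast
    then have "s a = a" using assms units_iff by blast
    then have "a = r b" using ab by simp
    then show "g \<in> B" using ab by simp
  next
    assume "g \<in> B" then show "\<exists>a b. s a = r b \<and> m a b = g \<and> a \<in> V \<and> b \<in> B"
      by (intro exI[of _ "r g"] exI[of _ g]) (use assms in auto)
  qed
qed

lemma conv_unit_right:
  assumes "s ` B \<subseteq> V" "V \<subseteq> units s"
  shows "conv s r m (chi B) (chi V) = chi B"
proof (rule ext)
  fix g
  show "conv s r m (chi B) (chi V) g = chi B g" unfolding conv_def chi_def
  proof
    assume "\<exists>a b. s a = r b \<and> m a b = g \<and> a \<in> B \<and> b \<in> V"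
    then obtain a b where ab: "s a = r b" "m a b = g" "a \<in> B" "b \<in> V" by blast
    then have "r b = b" using assms unit_r by blast
    then have "b = s a" using ab by simp
    then have "g = a" using ab ms by metis
    then show "g \<in> B" using ab by simp
  next
    assume "g \<in> B" then show "\<exists>a b. s a = r b \<and> m a b = g \<and> a \<in> B \<and> b \<in> V"
      by (intro exI[of _ g] exI[of _ "s g"]) (use assms in auto)
  qed
qed

lemma conv_inv_left:
  assumes "compact_open_bisection s r B"
  shows "conv s r m (chi (iv ` B)) (chi B) = chi (s ` B)"
proof (rule ext)
  fix g
  have inj: "inj_on r B" using bis_inj assms by blast
  show "conv s r m (chi (iv ` B)) (chi B) g = chi (s ` B) g" unfolding conv_def chi_def
  proof
    assume "\<exists>a b. s a = r b \<and> m a b = g \<and> a \<in> iv ` B \<and> b \<in> B"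
    then obtain c b where ab: "s (iv c) = r b" "m (iv c) b = g" "c \<in> B" "b \<in> B" by blast
    then have "r c = r b" by simp
    then have "c = b" using inj ab by (meson inj_onD)
    then show "g \<in> s ` B" using ab by force
  next
    assume "g \<in> s ` B" then obtain b where b: "b \<in> B" "g = s b" by blast
    show "\<exists>a b. s a = r b \<and> m a b = g \<and> a \<in> iv ` B \<and> b \<in> B"
      by (intro exI[of _ "iv b"] exI[of _ b]) (use b in auto)
  qed
qed

lemma conv_inv_right:
  assumes "compact_open_bisection s r B"
  shows "conv s r m (chi B) (chi (iv ` B)) = chi (r ` B)"
proof (rule ext)
  fix g
  have inj: "inj_on s B" using bis_inj assms by blast
  show "conv s r m (chi B) (chi (iv ` B)) g = chi (r ` B) g" unfolding conv_def chi_def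
  proof
    assume "\<exists>a b. s a = r b \<and> m a b = g \<and> a \<in> B \<and> b \<in> iv ` B"
    then obtain a c where ab: "s a = r (iv c)" "m a (iv c) = g" "a \<in> B" "c \<in> B" by blast
    then have "s a = s c" by simp
    then have "a = c" using inj ab by (meson inj_onD)
    then show "g \<in> r ` B" using ab by force
  next
    assume "g \<in> r ` B" then obtain b where b: "b \<in> B" "g = r b" by blast
    show "\<exists>a c. s a = r c \<and> m a c = g \<and> a \<in> B \<and> c \<in> iv ` B"
      by (intro exI[of _ b] exI[of _ "iv b"]) (use b in auto)
  qed
qed

lemma conv_units:
  assumes "W \<subseteq> units s" "V \<subseteq> units s"
  shows "conv s r m (chi W) (chi V) = chi (W \<inter> V)"
proof (rule ext)
  fix g
  show "conv s r m (chi W) (chi V) g = chi (W \<inter> V) g" unfolding conv_def chi_def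
  proof
    assume "\<exists>a b. s a = r b \<and> m a b = g \<and> a \<in> W \<and> b \<in> V"
    then obtain a b where ab: "s a = r b" "m a b = g" "a \<in> W" "b \<in> V" by blast
    then have "s a = a" "r b = b" using assms units_iff unit_r by blast+
    then have "a = b" "g = a" using ab by (auto, metis ms)
    then show "g \<in> W \<inter> V" using ab by simp
  next
    assume "g \<in> W \<inter> V" then show "\<exists>a b. s a = r b \<and> m a b = g \<and> a \<in> W \<and> b \<in> V"
    proof (intro exI[of _ g] exI[of _ g])
      assume g: "g \<in> W \<inter> V"
      then have "s g = g" "r g = g" using assms units_iff unit_r by auto
      moreover have "m g (s g) = g" by simp
      ultimately show "s g = r g \<and> m g g = g \<and> g \<in> W \<and> g \<in> V" using g by simp
    qed
  qed
qed

end

definition bprod :: "('a \<Rightarrow> 'a) \<Rightarrow> ('a \<Rightarrow> 'a) \<Rightarrow> ('a \<Rightarrow> 'a \<Rightarrow> 'a) \<Rightarrow> 'a set \<Rightarrow> 'a set \<Rightarrow> 'a set" where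
  "bprod s r m U U' = {m a b |a b. s a = r b \<and> a \<in> U \<and> b \<in> U'}"

context ag begin

lemma conv_chi: "conv s r m (chi U) (chi U') = chi (bprod s r m U U')"
  unfolding conv_def chi_def bprod_def by (rule ext) blast

lemma bis_inv:
  assumes "compact_open_bisection s r B"
  obtains \<sigma> where "continuous_on (s ` B) \<sigma>" "\<And>t. t \<in> s ` B \<Longrightarrow> \<sigma> t \<in> B"
    "\<And>b. b \<in> B \<Longrightarrow> \<sigma> (s b) = b" "\<And>t. t \<in> s ` B \<Longrightarrow> s (\<sigma> t) = t"
proof -
  have "homeomorphic_map (top_of_set B) (top_of_set (s ` B)) s"
    using assms unfolding compact_open_bisection_def bisection_def by blast
  then obtain \<sigma> where h: "homeomorphic_maps (top_of_set B) (top_of_set (s ` B)) s \<sigma>"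
    using homeomorphic_map_maps by blast
  then have "continuous_map (top_of_set (s ` B)) (top_of_set B) \<sigma>"
    unfolding homeomorphic_maps_def by blast
  then have "continuous_on (s ` B) \<sigma>" "\<And>t. t \<in> s ` B \<Longrightarrow> \<sigma> t \<in> B"
    by (auto simp: continuous_map_subtopology_eu)
  moreover have "\<And>b. b \<in> B \<Longrightarrow> \<sigma> (s b) = b" "\<And>t. t \<in> s ` B \<Longrightarrow> s (\<sigma> t) = t"
    using h unfolding homeomorphic_maps_def by auto
  ultimately show ?thesis using that by blast
qed

lemma cont_m_comp:
  assumes "continuous_on X f" "continuous_on X g" "\<And>x. x \<in> X \<Longrightarrow> s (f x) = r (g x)"
  shows "continuous_on X (\<lambda>x. m (f x) (g x))"
proof -
  have "continuous_on X (\<lambda>x. (\<lambda>(x, y). m x y) (f x, g x))"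
    by (rule continuous_on_compose2[OF cont_m continuous_on_Pair[OF assms(1,2)]]) (use assms(3) in auto)
  then show ?thesis by simp
qed

lemma cs: "continuous_on X s" and cr: "continuous_on X r" and civ: "continuous_on X iv"
  using cont_s cont_r cont_iv continuous_on_subset by blast+

lemma bprod_open:
  assumes U: "compact_open_bisection s r U" and U': "compact_open_bisection s r U'"
  shows "open (bprod s r m U U')"
proof -
  obtain \<psi> where p1: "continuous_on (s ` U') \<psi>" and p2: "\<And>t. t \<in> s ` U' \<Longrightarrow> \<psi> t \<in> U'"
    and p3: "\<And>b. b \<in> U' \<Longrightarrow> \<psi> (s b) = b" and p4: "\<And>t. t \<in> s ` U' \<Longrightarrow> s (\<psi> t) = t"
    using bis_inv[OF U'] by blast
  define \<Omega> where "\<Omega> = s -` (s ` U')"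
  have oO: "open \<Omega>" unfolding \<Omega>_def
    using U' open_s open_vs unfolding compact_open_bisection_def by blast
  have c1: "continuous_on \<Omega> (\<lambda>x. \<psi> (s x))"
    by (rule continuous_on_compose2[OF p1 cs]) (auto simp: \<Omega>_def)
  have c2: "continuous_on \<Omega> (\<lambda>x. iv (\<psi> (s x)))"
    by (rule continuous_on_compose2[OF civ c1]) auto
  have cP: "continuous_on \<Omega> (\<lambda>x. m x (iv (\<psi> (s x))))"
    using cont_m_comp[of \<Omega> "\<lambda>x. x" "\<lambda>x. iv (\<psi> (s x))", OF continuous_on_id c2] by (auto simp: \<Omega>_def p4)
  have eq: "bprod s r m U U' = (\<lambda>x. m x (iv (\<psi> (s x)))) -` U \<inter> \<Omega>"
  proof
    show "bprod s r m U U' \<subseteq> (\<lambda>x. m x (iv (\<psi> (s x)))) -` U \<inter> \<Omega>"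
    proof
      fix x assume "x \<in> bprod s r m U U'"
      then obtain a b where ab: "x = m a b" "s a = r b" "a \<in> U" "b \<in> U'" unfolding bprod_def by blast
      have sx: "s x = s b" using ab sm by simp
      have "\<psi> (s x) = b" using sx p3 ab by simp
      moreover have "m x (iv b) = a"
      proof -
        have "m x (iv b) = m a (m b (iv b))" unfolding ab(1) by (rule assoc) (use ab in auto)
        also have "\<dots> = a" using ab by (simp, metis ms)
        finally show ?thesis .
      qed
      ultimately show "x \<in> (\<lambda>x. m x (iv (\<psi> (s x)))) -` U \<inter> \<Omega>"
        using ab sx unfolding \<Omega>_def by auto
    qed
    show "(\<lambda>x. m x (iv (\<psi> (s x)))) -` U \<inter> \<Omega> \<subseteq> bprod s r m U U'"
    proof
      fix x assume x: "x \<in> (\<lambda>x. m x (iv (\<psi> (s x)))) -` U \<inter> \<Omega>"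
      define b where "b = \<psi> (s x)"
      define a where "a = m x (iv b)"
      have b: "b \<in> U'" "s b = s x" using x p2 p4 unfolding b_def \<Omega>_def by auto
      have a: "a \<in> U" using x unfolding a_def b_def by simp
      have sa: "s a = r b" unfolding a_def using b by (simp add: sm)
      have "m a b = m x (m (iv b) b)" unfolding a_def by (rule assoc) (use b in auto)
      also have "\<dots> = x" using b by simp
      finally have "x = m a b" by simp
      then show "x \<in> bprod s r m U U'" unfolding bprod_def using a b sa by blast
    qed
  qed
  show ?thesis unfolding eq using cP oO continuous_on_open_vimage U
    unfolding compact_open_bisection_def by blast
qed

end

context ag begin

lemma bprod_compact:
  assumes U: "compact_open_bisection s r U" and U': "compact_open_bisection s r U'"
  shows "compact (bprod s r m U U')"
proof -
  obtain \<sigma> where q1: "continuous_on (s ` U) \<sigma>" and q2: "\<And>t. t \<in> s ` U \<Longrightarrow> \<sigma> t \<in> U"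
    and q3: "\<And>b. b \<in> U \<Longrightarrow> \<sigma> (s b) = b" and q4: "\<And>t. t \<in> s ` U \<Longrightarrow> s (\<sigma> t) = t"
    using bis_inv[OF U] by blast
  have cU: "compact U" "compact U'" using U U' unfolding compact_open_bisection_def by auto
  define D where "D = {b \<in> U'. r b \<in> s ` U}"
  have "compact (s ` U)" using cU compact_continuous_image cs by blast
  then have "compactin (top_of_set (units s)) (s ` U)"
    using range_s by (auto simp: compactin_subtopology)
  then have clU: "closedin (top_of_set (units s)) (s ` U)"
    using compactin_imp_closedin Haus by blast
  have "continuous_map (top_of_set U') (top_of_set (units s)) r"
    using cr range_r by (auto simp: continuous_map_subtopology_eu)
  then have "closedin (top_of_set U') {x \<in> topspace (top_of_set U'). r x \<in> s ` U}"
    using closedin_continuous_map_preimage clU by blast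
  then have "closedin (top_of_set U') D" unfolding D_def by simp
  then have cD: "compact D" using closedin_compact cU by blast
  have c1: "continuous_on D (\<lambda>b. \<sigma> (r b))"
    by (rule continuous_on_compose2[OF q1 cr]) (auto simp: D_def)
  have cF: "continuous_on D (\<lambda>b. m (\<sigma> (r b)) b)"
    using cont_m_comp[of D "\<lambda>b. \<sigma> (r b)" "\<lambda>b. b", OF c1 continuous_on_id] q4 by (auto simp: D_def)
  have eq: "bprod s r m U U' = (\<lambda>b. m (\<sigma> (r b)) b) ` D"
  proof
    show "bprod s r m U U' \<subseteq> (\<lambda>b. m (\<sigma> (r b)) b) ` D"
    proof
      fix x assume "x \<in> bprod s r m U U'"
      then obtain a b where ab: "x = m a b" "s a = r b" "a \<in> U" "b \<in> U'" unfolding bprod_def by blast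
      then have "\<sigma> (r b) = a" using q3 by metis
      moreover have "b \<in> D" using ab unfolding D_def by (metis (mono_tags, lifting) image_eqI mem_Collect_eq)
      ultimately show "x \<in> (\<lambda>b. m (\<sigma> (r b)) b) ` D" using ab by blast
    qed
    show "(\<lambda>b. m (\<sigma> (r b)) b) ` D \<subseteq> bprod s r m U U'"
    proof
      fix x assume "x \<in> (\<lambda>b. m (\<sigma> (r b)) b) ` D"
      then obtain b where b: "b \<in> D" "x = m (\<sigma> (r b)) b" by blast
      then have "\<sigma> (r b) \<in> U" "s (\<sigma> (r b)) = r b" "b \<in> U'" using q2 q4 unfolding D_def by auto
      then show "x \<in> bprod s r m U U'" unfolding bprod_def using b by blast
    qed
  qed
  show ?thesis unfolding eq using compact_continuous_image cF cD by blast
qed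

lemma bprod_homeo_s:
  assumes U: "compact_open_bisection s r U" and U': "compact_open_bisection s r U'"
  shows "homeomorphic_map (top_of_set (bprod s r m U U')) (top_of_set (s ` bprod s r m U U')) s"
proof -
  obtain \<sigma> where q1: "continuous_on (s ` U) \<sigma>" and q2: "\<And>t. t \<in> s ` U \<Longrightarrow> \<sigma> t \<in> U"
    and q3: "\<And>b. b \<in> U \<Longrightarrow> \<sigma> (s b) = b" and q4: "\<And>t. t \<in> s ` U \<Longrightarrow> s (\<sigma> t) = t"
    using bis_inv[OF U] by blast
  obtain \<psi> where p1: "continuous_on (s ` U') \<psi>" and p2: "\<And>t. t \<in> s ` U' \<Longrightarrow> \<psi> t \<in> U'"
    and p3: "\<And>b. b \<in> U' \<Longrightarrow> \<psi> (s b) = b" and p4: "\<And>t. t \<in> s ` U' \<Longrightarrow> s (\<psi> t) = t"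
    using bis_inv[OF U'] by blast
  let ?P = "bprod s r m U U'"
  define h where "h t = m (\<sigma> (r (\<psi> t))) (\<psi> t)" for t
  have rep: "\<exists>a b. x = m a b \<and> s a = r b \<and> a \<in> U \<and> b \<in> U' \<and> s x = s b \<and> \<psi> (s x) = b
      \<and> r (\<psi> (s x)) \<in> s ` U \<and> \<sigma> (r (\<psi> (s x))) = a" if xP: "x \<in> ?P" for x
  proof -
    obtain a b where ab: "x = m a b" "s a = r b" "a \<in> U" "b \<in> U'"
      using xP unfolding bprod_def by blast
    have sx: "s x = s b" using ab sm by simp
    have pb: "\<psi> (s x) = b" using sx p3 ab by simp
    have "r b \<in> s ` U" using ab by (metis image_eqI)
    moreover have "\<sigma> (r b) = a" using ab q3 by metis
    ultimately show ?thesis using ab sx pb by auto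
  qed
  have hs: "h (s x) = x" if "x \<in> ?P" for x
    using rep[OF that] unfolding h_def by auto
  have sub: "s ` ?P \<subseteq> s ` U'" using rep by fastforce
  have ch: "continuous_on (s ` ?P) h"
  proof -
    have c0: "continuous_on (s ` ?P) \<psi>" using p1 sub continuous_on_subset by blast
    have c1: "continuous_on (s ` ?P) (\<lambda>t. \<sigma> (r (\<psi> t)))"
    proof (rule continuous_on_compose2[OF q1 continuous_on_compose2[OF cr c0]])
      show "(\<lambda>t. r (\<psi> t)) ` s ` ?P \<subseteq> s ` U" using rep by fastforce
    qed auto
    show ?thesis unfolding h_def
    proof (rule cont_m_comp[OF c1 c0])
      fix t assume "t \<in> s ` ?P"
      then show "s (\<sigma> (r (\<psi> t))) = r (\<psi> t)" using rep q4 by fastforce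
    qed
  qed
  have "homeomorphic_maps (top_of_set ?P) (top_of_set (s ` ?P)) s h"
    unfolding homeomorphic_maps_def
  proof (intro conjI)
    show "continuous_map (top_of_set ?P) (top_of_set (s ` ?P)) s"
      using cs by (auto simp: continuous_map_subtopology_eu)
    show "continuous_map (top_of_set (s ` ?P)) (top_of_set ?P) h"
      using ch hs by (auto simp: continuous_map_subtopology_eu)
    show "\<forall>x\<in>topspace (top_of_set ?P). h (s x) = x" using hs by simp
    show "\<forall>y\<in>topspace (top_of_set (s ` ?P)). s (h y) = y" using hs by auto
  qed
  then show ?thesis using homeomorphic_map_maps by blast
qed

end

context ag begin

lemma opp: "ag r s (\<lambda>x y. m y x) iv"
  unfolding ag_def ample_groupoid_def units_r
proof (intro conjI)
  show "groupoid r s (\<lambda>x y. m y x) iv"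
    unfolding groupoid_def
  proof (intro conjI allI impI)
    fix x y z
    show "r x = s y \<Longrightarrow> r (m y x) = r y" by (simp add: rm)
    show "r x = s y \<Longrightarrow> s (m y x) = s x" by (simp add: sm)
    show "r x = s y \<and> r y = s z \<Longrightarrow> m z (m y x) = m (m z y) x" by (simp add: assoc)
  qed auto
  have "continuous_on {(x, y). r x = s y} (\<lambda>x. (\<lambda>(x, y). m x y) (prod.swap x))"
    by (rule continuous_on_compose2[OF cont_m continuous_on_swap]) auto
  then show "continuous_on {(x, y). r x = s y} (\<lambda>(x, y). m y x)"
    by (simp add: case_prod_unfold)
qed (use amp lh_s lh_r cont_iv in \<open>auto simp: ample_groupoid_def\<close>)

lemma cob_sym: "compact_open_bisection r s U \<longleftrightarrow> compact_open_bisection s r U"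
  unfolding compact_open_bisection_def bisection_def by blast

lemma bprod_opp: "bprod r s (\<lambda>x y. m y x) U' U = bprod s r m U U'"
  unfolding bprod_def by (auto; metis)

lemma bprod_cob:
  assumes U: "compact_open_bisection s r U" and U': "compact_open_bisection s r U'"
  shows "compact_open_bisection s r (bprod s r m U U')"
proof -
  interpret o: ag r s "\<lambda>x y. m y x" iv by (rule opp)
  have "homeomorphic_map (top_of_set (bprod r s (\<lambda>x y. m y x) U' U))
      (top_of_set (r ` bprod r s (\<lambda>x y. m y x) U' U)) r"
    by (rule o.bprod_homeo_s) (use U U' cob_sym in auto)
  then show ?thesis
    using bprod_open[OF U U'] bprod_compact[OF U U'] bprod_homeo_s[OF U U'] bprod_opp
    unfolding compact_open_bisection_def bisection_def by metis
qed

end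

lemma finite_sum_in:
  assumes F: "finite F" and Z: "(\<lambda>_. False) \<in> I" and P: "\<forall>f\<in>I. \<forall>h\<in>I. bplus f h \<in> I"
    and all: "\<forall>x\<in>F. f x \<in> I"
  shows "(\<lambda>g. \<exists>x\<in>F. f x g) \<in> I"
  using F all
proof (induction F rule: finite_induct)
  case empty then show ?case using Z by simp
next
  case (insert x F)
  have "(\<lambda>g. \<exists>y\<in>insert x F. f y g) = bplus (f x) (\<lambda>g. \<exists>y\<in>F. f y g)"
    unfolding bplus_def by auto
  then show ?case using insert P by simp
qed

context ag begin

lemma chi_steinberg: "compact_open_bisection s r U \<Longrightarrow> chi U \<in> steinberg s r"
  unfolding steinberg_def chi_def by (rule CollectI, rule exI[of _ "{U}"]) auto

lemma conv_sum:
  "conv s r m (\<lambda>g. \<exists>U\<in>F. g \<in> U) (\<lambda>g. \<exists>U\<in>H. g \<in> U)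
    = (\<lambda>g. \<exists>W\<in>(\<lambda>(U, U'). bprod s r m U U') ` (F \<times> H). g \<in> W)"
proof (rule ext, rule iffI)
  fix g assume "conv s r m (\<lambda>g. \<exists>U\<in>F. g \<in> U) (\<lambda>g. \<exists>U\<in>H. g \<in> U) g"
  then obtain a b U U' where ab: "s a = r b" "m a b = g" "U \<in> F" "a \<in> U" "U' \<in> H" "b \<in> U'"
    unfolding conv_def by blast
  then have g1: "g \<in> bprod s r m U U'" unfolding bprod_def by blast
  have g2: "bprod s r m U U' \<in> (\<lambda>(U, U'). bprod s r m U U') ` (F \<times> H)"
    using ab by (intro image_eqI[of _ _ "(U, U')"]) auto
  show "\<exists>W\<in>(\<lambda>(U, U'). bprod s r m U U') ` (F \<times> H). g \<in> W" using g2 g1 by (rule rev_bexI)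
next
  fix g assume "\<exists>W\<in>(\<lambda>(U, U'). bprod s r m U U') ` (F \<times> H). g \<in> W"
  then obtain U U' where UU: "U \<in> F" "U' \<in> H" "g \<in> bprod s r m U U'" by auto
  then obtain a b where "g = m a b" "s a = r b" "a \<in> U" "b \<in> U'" unfolding bprod_def by blast
  then show "conv s r m (\<lambda>g. \<exists>U\<in>F. g \<in> U) (\<lambda>g. \<exists>U\<in>H. g \<in> U) g"
    unfolding conv_def using UU by blast
qed

lemma steinberg_zero: "(\<lambda>_. False) \<in> steinberg s r"
  unfolding steinberg_def by (rule CollectI, rule exI[of _ "{}"]) auto

lemma steinberg_bplus:
  assumes "f \<in> steinberg s r" "h \<in> steinberg s r" shows "bplus f h \<in> steinberg s r"
proof -
  obtain F H where F: "finite F" "\<forall>U\<in>F. compact_open_bisection s r U" "f = (\<lambda>g. \<exists>U\<in>F. g \<in> U)"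
    and H: "finite H" "\<forall>U\<in>H. compact_open_bisection s r U" "h = (\<lambda>g. \<exists>U\<in>H. g \<in> U)"
    using assms unfolding steinberg_def by blast
  show "bplus f h \<in> steinberg s r" unfolding steinberg_def
    by (rule CollectI, rule exI[of _ "F \<union> H"]) (use F H in \<open>auto simp: bplus_def\<close>)
qed

lemma steinberg_conv:
  assumes "a \<in> steinberg s r" "f \<in> steinberg s r" shows "conv s r m a f \<in> steinberg s r"
proof -
  obtain F H where F: "finite F" "\<forall>U\<in>F. compact_open_bisection s r U" "a = (\<lambda>g. \<exists>U\<in>F. g \<in> U)"
    and H: "finite H" "\<forall>U\<in>H. compact_open_bisection s r U" "f = (\<lambda>g. \<exists>U\<in>H. g \<in> U)"
    using assms unfolding steinberg_def by blast
  have c1: "conv s r m a f = (\<lambda>g. \<exists>U\<in>(\<lambda>(U, U'). bprod s r m U U') ` (F \<times> H). g \<in> U)"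
    unfolding F(3) H(3) by (rule conv_sum)
  have cb: "\<forall>U\<in>(\<lambda>(U, U'). bprod s r m U U') ` (F \<times> H). compact_open_bisection s r U"
    using F(2) H(2) bprod_cob by auto
  show ?thesis unfolding c1 steinberg_def
    by (rule CollectI, rule exI[of _ "(\<lambda>(U, U'). bprod s r m U U') ` (F \<times> H)"]) (use cb F(1) H(1) in simp)
qed

lemma steinberg_ideal: "is_ideal s r m (steinberg s r)"
  unfolding is_ideal_def using steinberg_zero steinberg_bplus steinberg_conv by blast

lemma steinberg_elem_in:
  assumes I: "is_ideal s r m I" and ch: "\<And>U. compact_open_bisection s r U \<Longrightarrow> chi U \<in> I"
  shows "steinberg s r \<subseteq> I"
proof
  fix f assume "f \<in> steinberg s r"
  then obtain F where F: "finite F" "\<forall>U\<in>F. compact_open_bisection s r U" "f = (\<lambda>g. \<exists>U\<in>F. chi U g)"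
    unfolding steinberg_def chi_def by blast
  show "f \<in> I" unfolding F(3)
    by (rule finite_sum_in[OF F(1)]) (use I F ch in \<open>auto simp: is_ideal_def\<close>)
qed

lemma dir1:
  assumes min: "minimal_groupoid s r" and V: "V \<noteq> {}" "V \<subseteq> units s" "compact V" "open V"
    and I: "is_ideal s r m I" "chi V \<in> I"
  shows "steinberg s r \<subseteq> I"
proof -
  have Iconv: "\<And>a f. a \<in> steinberg s r \<Longrightarrow> f \<in> I \<Longrightarrow> conv s r m a f \<in> I \<and> conv s r m f a \<in> I"
    using I unfolding is_ideal_def by blast
  have Izero: "(\<lambda>_. False) \<in> I" and Iplus: "\<forall>f\<in>I. \<forall>h\<in>I. bplus f h \<in> I"
    using I unfolding is_ideal_def by blast+
  have orbit: "\<exists>g. r g = x \<and> s g \<in> V" if x: "x \<in> units s" for x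
  proof -
    define D where "D = r ` (s -` V)"
    have "open (s -` V)" using open_vs V by blast
    then have "open D" unfolding D_def by (rule open_r)
    moreover have "D \<subseteq> units s" unfolding D_def using range_r by blast
    ultimately have "openin (top_of_set (units s)) D" using openin_units by blast
    moreover have "invariant s r D" unfolding invariant_def
    proof (intro conjI allI impI)
      show "D \<subseteq> units s" unfolding D_def using range_r by blast
      fix h assume "s h \<in> D"
      then obtain g where g: "s h = r g" "s g \<in> V" unfolding D_def by blast
      then have "r (m h g) = r h" "s (m h g) = s g" using rm sm by auto
      then show "r h \<in> D" unfolding D_def using g image_eqI[of "r h" r "m h g" "s -` V"] by simp
    qed
    ultimately have "D = {} \<or> D = units s" using min unfolding minimal_groupoid_def by blast
    moreover have "D \<noteq> {}"
    proof -
      obtain v where v: "v \<in> V" using V by blast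
      have vu: "v \<in> units s" using V v by blast
      have "s v = v" "r v = v" using units_iff[of v] unit_r[OF vu] vu by auto
      then have "v \<in> D" unfolding D_def using v image_eqI[of v r v "s -` V"] by simp
      then show ?thesis by blast
    qed
    ultimately have "x \<in> D" using x by blast
    then show ?thesis unfolding D_def by blast
  qed
  have loc: "\<exists>N. open N \<and> x \<in> N \<and> N \<subseteq> W \<and> chi N \<in> I"
    if W: "W \<subseteq> units s" "open W" and x: "x \<in> W" for W x
  proof -
    obtain g where g: "r g = x" "s g \<in> V" using orbit W x by blast
    have oo: "open (s -` V \<inter> r -` W)" using open_vs open_vr V W by (simp add: open_Int)
    have gg: "g \<in> s -` V \<inter> r -` W" using g x by simp
    obtain B where B: "compact_open_bisection s r B" "g \<in> B" "B \<subseteq> s -` V \<inter> r -` W"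
      using small_bisection[OF oo gg] by blast
    have "conv s r m (chi B) (chi V) = chi B"
      by (rule conv_unit_right) (use B V in auto)
    moreover have "conv s r m (chi B) (chi V) \<in> I" using Iconv[OF chi_steinberg[OF B(1)] I(2)] by blast
    ultimately have "chi B \<in> I" by simp
    moreover have "conv s r m (chi B) (chi (iv ` B)) = chi (r ` B)" by (rule conv_inv_right[OF B(1)])
    moreover have "conv s r m (chi B) (chi (iv ` B)) \<in> I"
      using Iconv[OF chi_steinberg[OF iv_cob[OF B(1)]] \<open>chi B \<in> I\<close>] by blast
    ultimately have "chi (r ` B) \<in> I" by simp
    moreover have "open (r ` B)" using B open_r unfolding compact_open_bisection_def by blast
    moreover have "x \<in> r ` B" using B g by blast
    moreover have "r ` B \<subseteq> W" using B by blast
    ultimately show ?thesis by blast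
  qed
  have unitset: "chi W \<in> I" if W: "W \<subseteq> units s" "open W" "compact W" for W
  proof -
    let ?C = "{N. open N \<and> N \<subseteq> W \<and> chi N \<in> I}"
    have "W \<subseteq> \<Union>?C"
    proof
      fix x assume "x \<in> W"
      then obtain N where "open N" "x \<in> N" "N \<subseteq> W" "chi N \<in> I" using loc[OF W(1,2)] by blast
      then show "x \<in> \<Union>?C" by blast
    qed
    then obtain F where F: "F \<subseteq> ?C" "finite F" "W \<subseteq> \<Union>F"
    proof (rule compactE[OF W(3), of ?C])
      show "\<And>B. B \<in> ?C \<Longrightarrow> open B" by blast
    qed (use that in blast)
    have "chi W = (\<lambda>g. \<exists>N\<in>F. chi N g)" unfolding chi_def
    proof (rule ext)
      fix g show "(g \<in> W) = (\<exists>N\<in>F. g \<in> N)" using F(1,3) by blast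
    qed
    moreover have "(\<lambda>g. \<exists>N\<in>F. chi N g) \<in> I"
    proof (rule finite_sum_in[OF F(2) Izero Iplus])
      show "\<forall>x\<in>F. chi x \<in> I" using F(1) by blast
    qed
    ultimately show ?thesis by simp
  qed
  show ?thesis
  proof (rule steinberg_elem_in[OF I(1)])
    fix U assume U: "compact_open_bisection s r U"
    have u1: "s ` U \<subseteq> units s" using range_s by blast
    have u2: "open (s ` U)" using U open_s unfolding compact_open_bisection_def by blast
    have u3: "compact (s ` U)"
      by (rule compact_continuous_image[OF cs]) (use U in \<open>simp add: compact_open_bisection_def\<close>)
    have "chi (s ` U) \<in> I" by (rule unitset[OF u1 u2 u3])
    moreover have "conv s r m (chi U) (chi (s ` U)) = chi U"
      by (rule conv_unit_right[OF subset_refl u1])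
    moreover have "conv s r m (chi U) (chi (s ` U)) \<in> I"
      using Iconv[OF chi_steinberg[OF U] \<open>chi (s ` U) \<in> I\<close>] by blast
    ultimately show "chi U \<in> I" by simp
  qed
qed

lemma dir2:
  assumes H: "\<forall>V. V \<noteq> {} \<and> V \<subseteq> units s \<and> compact V \<and> openin (top_of_set (units s)) V \<longrightarrow>
         ideal_generated s r m (chi V) = steinberg s r"
  shows "minimal_groupoid s r"
  unfolding minimal_groupoid_def
proof (intro allI impI)
  fix D assume D: "openin (top_of_set (units s)) D \<and> invariant s r D"
  show "D = {} \<or> D = units s"
  proof (rule ccontr)
    assume ne: "\<not> (D = {} \<or> D = units s)"
    have Dsub: "D \<subseteq> units s" and oD: "open D" and inv: "\<And>g. s g \<in> D \<Longrightarrow> r g \<in> D"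
      using D openin_units unfolding invariant_def by auto
    obtain y where y: "y \<in> D" using ne by blast
    obtain K where K: "compact K" "open K" "y \<in> K" "K \<subseteq> D" using zd_units[OF oD Dsub y] by blast
    have "K \<noteq> {} \<and> K \<subseteq> units s \<and> compact K \<and> openin (top_of_set (units s)) K"
      using K Dsub openin_units by blast
    then have "ideal_generated s r m (chi K) = steinberg s r" using H by blast
    define J where "J = {f \<in> steinberg s r. \<forall>g. f g \<longrightarrow> s g \<in> D}"
    have SI: "is_ideal s r m (steinberg s r)" by (rule steinberg_ideal)
    have J1: "J \<subseteq> steinberg s r" unfolding J_def by blast
    have J2: "(\<lambda>_. False) \<in> J" using steinberg_zero unfolding J_def by simp
    have J3: "bplus f h \<in> J" if "f \<in> J" "h \<in> J" for f h
      using that steinberg_bplus unfolding J_def by (auto simp: bplus_def)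
    have J4: "conv s r m a f \<in> J \<and> conv s r m f a \<in> J" if a: "a \<in> steinberg s r" and f: "f \<in> J" for a f
    proof -
      have st: "conv s r m a f \<in> steinberg s r" "conv s r m f a \<in> steinberg s r"
        using steinberg_conv a f unfolding J_def by auto
      have "s g \<in> D" if cg: "conv s r m a f g" for g
      proof -
        obtain a' b where "s a' = r b" "m a' b = g" "f b" using cg unfolding conv_def by blast
        then show ?thesis using f sm unfolding J_def by auto
      qed
      moreover have "s g \<in> D" if cg: "conv s r m f a g" for g
      proof -
        obtain a' b where ab: "s a' = r b" "m a' b = g" "f a'" using cg unfolding conv_def by blast
        then have "r b \<in> D" using f unfolding J_def by auto
        then have "r (iv b) \<in> D" using inv[of "iv b"] by simp
        then show ?thesis using ab sm by auto
      qed
      ultimately show "conv s r m a f \<in> J \<and> conv s r m f a \<in> J" using st unfolding J_def by blast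
    qed
    have "is_ideal s r m J" unfolding is_ideal_def using J1 J2 J3 J4 by blast
    moreover have "chi K \<in> J"
    proof -
      have KU: "K \<subseteq> units s" using K Dsub by blast
      have "chi K \<in> steinberg s r" using chi_steinberg[OF cob_units[OF KU K(1,2)]] .
      moreover have "\<forall>g. chi K g \<longrightarrow> s g \<in> D"
      proof (intro allI impI)
        fix g assume "chi K g"
        then have "g \<in> K" unfolding chi_def .
        then have "s g = g" "g \<in> D" using KU K units_iff by auto
        then show "s g \<in> D" by simp
      qed
      ultimately show ?thesis unfolding J_def by blast
    qed
    ultimately have "ideal_generated s r m (chi K) \<subseteq> J" unfolding ideal_generated_def by blast
    then have SJ: "steinberg s r \<subseteq> J" using \<open>ideal_generated s r m (chi K) = steinberg s r\<close> by simp
    obtain z where z: "z \<in> units s" "z \<notin> D" using ne Dsub by blast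
    obtain K' where K': "compact K'" "open K'" "z \<in> K'" "K' \<subseteq> units s"
      using zd_units[OF open_units subset_refl z(1)] by blast
    have "chi K' \<in> J" using SJ chi_steinberg[OF cob_units[OF K'(4,1,2)]] by blast
    then have "s z \<in> D" using K' unfolding J_def chi_def by blast
    then show False using z units_iff by simp
  qed
qed

end

theorem lemma3p3:
  fixes s r :: "'a::topological_space \<Rightarrow> 'a" and m :: "'a \<Rightarrow> 'a \<Rightarrow> 'a" and iv :: "'a \<Rightarrow> 'a"
  assumes "ample_groupoid s r m iv"
  shows "minimal_groupoid s r \<longleftrightarrow>
    (\<forall>V. V \<noteq> {} \<and> V \<subseteq> units s \<and> compact V \<and> openin (top_of_set (units s)) V \<longrightarrow>
         ideal_generated s r m (chi V) = steinberg s r)"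
proof -
  interpret ag s r m iv by (rule ag.intro[OF assms])
  show ?thesis
  proof
    assume min: "minimal_groupoid s r"
    show "\<forall>V. V \<noteq> {} \<and> V \<subseteq> units s \<and> compact V \<and> openin (top_of_set (units s)) V \<longrightarrow>
         ideal_generated s r m (chi V) = steinberg s r"
    proof (intro allI impI)
      fix V assume V: "V \<noteq> {} \<and> V \<subseteq> units s \<and> compact V \<and> openin (top_of_set (units s)) V"
      then have V': "V \<noteq> {}" "V \<subseteq> units s" "compact V" "open V" using openin_units by auto
      have cV: "chi V \<in> steinberg s r" using chi_steinberg[OF cob_units[OF V'(2,3,4)]] .
      have "ideal_generated s r m (chi V) \<subseteq> steinberg s r"
        unfolding ideal_generated_def using steinberg_ideal cV by blast
      moreover have "steinberg s r \<subseteq> ideal_generated s r m (chi V)"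
        unfolding ideal_generated_def using dir1[OF min V'] by blast
      ultimately show "ideal_generated s r m (chi V) = steinberg s r" by blast
    qed
  next
    assume "\<forall>V. V \<noteq> {} \<and> V \<subseteq> units s \<and> compact V \<and> openin (top_of_set (units s)) V \<longrightarrow>
         ideal_generated s r m (chi V) = steinberg s r"
    then show "minimal_groupoid s r" by (rule dir2)
  qed
qed
end
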